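(* Let $n\ge 2$, $b>0$, $\rho=e^{2\pi i/n}$, and for $\lambda\in\mathbb{C}$ let $\zeta=\lambda^{1/n}$ denote the principal $n$-th root and $\tilde r_j(\lambda)=\exp(\rho^{j-1}\lambda^{1/n}b)$, $j=1,\dots,n$. For every $\beta\in(0,1)$ there is $\delta=\delta(\beta)>0$, with $\delta(\beta)\to0^+$ as $\beta\to0^+$, such that for all $j,k\in\{1,\dots,n\}$ and all $\lambda\in\mathbb{C}$, $$|\tilde r_k(\lambda)-\tilde r_j(\lambda)|\ge\beta\max\{|\tilde r_j(\lambda)|,|\tilde r_k(\lambda)|\}$$ provided $(\rho^{k-1}-\rho^{j-1})\zeta b\notin\bigcup_{m\in\mathbb{Z}}\{z\in\mathbb{C}:|z-2\pi i m|<\delta\}$.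
   Context: The $\tilde r_j(\lambda)$ are the Floquet multipliers of the equation $u^{(n)}=\lambda u$ with period $b$. *)

theory Defs
  imports "HOL-Analysis.Analysis"
begin

definition unit_root :: "nat \<Rightarrow> complex" where
  "unit_root n = exp (2 * of_real pi * \<i> / of_nat n)"

text \<open>Principal n-th root: exp(Ln z / n) for z nonzero, 0 for z = 0 (complex powr).\<close>
definition principal_root :: "nat \<Rightarrow> complex \<Rightarrow> complex" where
  "principal_root n z = z powr (1 / of_nat n)"

definition floquet_mult :: "nat \<Rightarrow> real \<Rightarrow> nat \<Rightarrow> complex \<Rightarrow> complex" where
  "floquet_mult n b j lam = exp (unit_root n ^ (j - 1) * principal_root n lam * of_real b)"

end

theory Submission
  imports Defs
begin

definition dlt :: "real \<Rightarrow> real" where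
  "dlt \<beta> = (if \<beta> < 1/2 then 2 * \<beta> else pi + 1 - ln (1 - \<beta>))"

lemma key:
  fixes w :: complex and \<beta> :: real
  assumes b: "0 < \<beta>" "\<beta> < 1"
    and H: "\<forall>m::int. cmod (w - 2 * of_real pi * \<i> * of_int m) \<ge> dlt \<beta>"
  shows "cmod (exp w - 1) \<ge> \<beta>"
proof (cases "\<beta> < 1/2")
  case True
  show ?thesis
  proof (rule ccontr)
    assume "\<not> ?thesis"
    hence lt: "cmod (exp w - 1) < \<beta>" by simp
    define z where "z = exp w - 1"
    have "cmod z < 1/2" using lt True z_def by simp
    hence le: "cmod (Ln (1 + z)) \<le> 2 * cmod z" by (rule norm_Ln_le)
    have "1 + z = exp w" by (simp add: z_def)
    have "exp w = exp (Ln (exp w))" by simp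
    then obtain n::int where n: "w = Ln (exp w) + (of_int (2 * n) * pi) * \<i>"
      using exp_eq by blast
    have "w - 2 * of_real pi * \<i> * of_int n = Ln (exp w)"
      using n by (simp add: algebra_simps)
    hence "cmod (w - 2 * of_real pi * \<i> * of_int n) < 2 * \<beta>"
      using le lt \<open>1 + z = exp w\<close> z_def by simp
    moreover have "cmod (w - 2 * of_real pi * \<i> * of_int n) \<ge> 2 * \<beta>"
      using H True unfolding dlt_def by auto
    ultimately show False by simp
  qed
next
  case False
  define m :: int where "m = round (Im w / (2 * pi))"
  have "\<bar>Im w / (2*pi) - of_int m\<bar> \<le> 1/2" unfolding m_def by (rule of_int_round_abs_le[of "Im w / (2*pi)", simplified abs_minus_commute])
  hence "\<bar>Im w - 2 * pi * of_int m\<bar> \<le> pi"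
  proof -
    assume a: "\<bar>Im w / (2*pi) - of_int m\<bar> \<le> 1/2"
    have "Im w - 2 * pi * of_int m = 2*pi * (Im w / (2*pi) - of_int m)" by (simp add: field_simps)
    hence "\<bar>Im w - 2 * pi * of_int m\<bar> = 2*pi * \<bar>Im w / (2*pi) - of_int m\<bar>" by (simp add: abs_mult)
    moreover have "2*pi * \<bar>Im w / (2*pi) - of_int m\<bar> \<le> 2*pi * (1/2)"
      using a pi_gt_zero by (intro mult_left_mono) auto
    ultimately show ?thesis by simp
  qed
  have "dlt \<beta> \<le> cmod (w - 2 * of_real pi * \<i> * of_int m)" using H by blast
  also have "\<dots> \<le> \<bar>Re (w - 2 * of_real pi * \<i> * of_int m)\<bar> + \<bar>Im (w - 2 * of_real pi * \<i> * of_int m)\<bar>"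
    by (rule cmod_le)
  also have "\<dots> \<le> \<bar>Re w\<bar> + pi" using \<open>\<bar>Im w - 2 * pi * of_int m\<bar> \<le> pi\<close> by simp
  finally have R: "\<bar>Re w\<bar> \<ge> 1 - ln (1 - \<beta>)" using False unfolding dlt_def by simp
  have lnpos: "- ln (1 - \<beta>) \<ge> 0" using b by simp
  have tri: "\<bar>exp (Re w) - 1\<bar> \<le> cmod (exp w - 1)"
    using norm_triangle_ineq3[of "exp w" 1] by (simp add: norm_exp_eq_Re)
  show ?thesis
  proof (cases "Re w \<ge> 0")
    case True
    hence "Re w \<ge> 1" using R lnpos by simp
    hence "exp (Re w) \<ge> exp 1" by simp
    moreover have "exp (1::real) \<ge> 2" using exp_ge_add_one_self[of 1] by simp
    ultimately have "exp (Re w) \<ge> 2" by linarith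
    hence "\<bar>exp (Re w) - 1\<bar> \<ge> 1" by simp
    thus ?thesis using tri b by linarith
  next
    case F: False
    hence "Re w \<le> ln (1 - \<beta>)" using R by simp
    hence "exp (Re w) \<le> exp (ln (1 - \<beta>))" by simp
    also have "\<dots> = 1 - \<beta>" using b by simp
    finally show ?thesis using tri by simp
  qed
qed

theorem corollary1:
  fixes n :: nat and b :: real
  assumes "n \<ge> 2" and "b > 0"
  shows "\<exists>\<delta> :: real \<Rightarrow> real.
    (\<forall>\<beta>\<in>{0<..<1}. \<delta> \<beta> > 0) \<and>
    (\<delta> \<longlongrightarrow> 0) (at_right 0) \<and>
    (\<forall>\<beta>\<in>{0<..<1}. \<forall>j\<in>{1..n}. \<forall>k\<in>{1..n}. \<forall>lam::complex.
       (\<forall>m::int. cmod ((unit_root n ^ (k - 1) - unit_root n ^ (j - 1)) * principal_root n lam * of_real b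
                         - 2 * of_real pi * \<i> * of_int m) \<ge> \<delta> \<beta>)
       \<longrightarrow> cmod (floquet_mult n b k lam - floquet_mult n b j lam)
           \<ge> \<beta> * max (cmod (floquet_mult n b j lam)) (cmod (floquet_mult n b k lam)))"
proof (intro exI[of _ dlt] conjI ballI allI impI)
  fix \<beta> :: real assume "\<beta> \<in> {0<..<1}"
  then have "ln (1 - \<beta>) < 0" by simp
  moreover have "\<beta> > 0" using \<open>\<beta> \<in> {0<..<1}\<close> by simp
  ultimately show "dlt \<beta> > 0" unfolding dlt_def
    using pi_gt_zero by (simp only: if_split) linarith
next
  have "eventually (\<lambda>\<beta>. 2 * \<beta> = dlt \<beta>) (at_right (0::real))"
    unfolding eventually_at_right_field dlt_def
    by (rule exI[of _ "1/2"]) auto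
  moreover have "((\<lambda>\<beta>::real. 2 * \<beta>) \<longlongrightarrow> 0) (at_right 0)"
    by (auto intro!: tendsto_eq_intros)
  ultimately show "(dlt \<longlongrightarrow> 0) (at_right 0)" using Lim_transform_eventually by blast
next
  fix \<beta> :: real and j k :: nat and lam :: complex
  assume bb: "\<beta> \<in> {0<..<1}"
  define w where "w = (unit_root n ^ (k - 1) - unit_root n ^ (j - 1)) * principal_root n lam * of_real b"
  define aj where "aj = unit_root n ^ (j - 1) * principal_root n lam * of_real b"
  define ak where "ak = unit_root n ^ (k - 1) * principal_root n lam * of_real b"
  assume H: "\<forall>m::int. cmod ((unit_root n ^ (k - 1) - unit_root n ^ (j - 1)) * principal_root n lam * of_real b
                         - 2 * of_real pi * \<i> * of_int m) \<ge> dlt \<beta>"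
  hence H1: "\<forall>m::int. cmod (w - 2 * of_real pi * \<i> * of_int m) \<ge> dlt \<beta>" unfolding w_def .
  have H2: "\<forall>m::int. cmod (-w - 2 * of_real pi * \<i> * of_int m) \<ge> dlt \<beta>"
  proof
    fix m :: int
    have "cmod (-w - 2 * of_real pi * \<i> * of_int m) = cmod (w - 2 * of_real pi * \<i> * of_int (-m))"
    proof -
      have "-w - 2 * of_real pi * \<i> * of_int m = -(w - 2 * of_real pi * \<i> * of_int (-m))" by simp
      then show ?thesis by (simp only: norm_minus_cancel)
    qed
    then show "cmod (-w - 2 * of_real pi * \<i> * of_int m) \<ge> dlt \<beta>" using H1[rule_format, of "-m"] by simp
  qed
  have wk: "ak = aj + w" unfolding w_def aj_def ak_def by (simp add: algebra_simps)
  have fj: "floquet_mult n b j lam = exp aj" and fk: "floquet_mult n b k lam = exp ak"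
    unfolding floquet_mult_def aj_def ak_def by simp_all
  have e1: "exp ak - exp aj = exp aj * (exp w - 1)" using wk by (simp add: exp_add algebra_simps)
  have e2: "exp ak - exp aj = - (exp ak * (exp (-w) - 1))" using wk
    by (simp add: exp_add exp_minus field_simps)
  have k1: "cmod (exp w - 1) \<ge> \<beta>" using key[OF _ _ H1] bb by auto
  have k2: "cmod (exp (-w) - 1) \<ge> \<beta>" using key[OF _ _ H2] bb by auto
  have "cmod (exp ak - exp aj) \<ge> \<beta> * cmod (exp aj)"
    unfolding e1 norm_mult using k1 by (simp add: mult.commute mult_left_mono)
  moreover have "cmod (exp ak - exp aj) \<ge> \<beta> * cmod (exp ak)"
    unfolding e2 norm_minus_cancel norm_mult using k2 by (simp add: mult.commute mult_left_mono)
  ultimately show "cmod (floquet_mult n b k lam - floquet_mult n b j lam)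
           \<ge> \<beta> * max (cmod (floquet_mult n b j lam)) (cmod (floquet_mult n b k lam))"
    unfolding fj fk by (simp add: max_def)
qed

end
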